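(* Let $X,Y$ be triangulable spaces, $f:X\to Y$ a homeomorphism, $k\in\mathbb{Z}$, and $\vec\varphi:X\to\mathbb{R}^n$, $\vec\psi:Y\to\mathbb{R}^n$ continuous functions with $\max_{x\in X}\|\vec\varphi(x)-\vec\psi(f(x))\|_\infty\le h$. Setting $\vec h=(h,\dots,h)$, for every $(\vec u,\vec v)\in\Delta^+$ we have $\rho_{(X,\vec\varphi),k}(\vec u-\vec h,\vec v+\vec h)\le\rho_{(Y,\vec\psi),k}(\vec u,\vec v)$.
   Context: A triangulable space is a space homeomorphic to the underlying space of a finite simplicial complex. $\|\cdot\|_\infty$ is the max-norm on $\mathbb{R}^n$. For $\vec u,\vec v\in\mathbb{R}^n$, $\vec u\preceq\vec v$ (resp. $\prec$) means $u_i\le v_i$ (resp. $u_i<v_i$) for all $i$; $\Delta^+=\{(\vec u,\vec v):\vec u\prec\vec v\}$. $X\langle\vec\varphi\preceq\vec u\rangle=\{x\in X:\varphi_i(x)\le u_i\ \forall i\}$. Homology is Čech homology with coefficients in a field. For $\vec u\prec\vec v$, $\rho_{(X,\vec\varphi),k}(\vec u,\vec v)$ is the rank of the map $\check H_k(X\langle\vec\varphi\preceq\vec u\rangle)\to\check H_k(X\langle\vec\varphi\preceq\vec v\rangle)$ induced by inclusion. *)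

theory Defs
  imports "HOL-Analysis.Analysis" "HOL-Library.Extended_Nat"
begin

definition finite_simplicial_complex :: "nat set set \<Rightarrow> bool" where
  "finite_simplicial_complex K \<longleftrightarrow> finite K \<and> (\<forall>\<sigma>\<in>K. finite \<sigma> \<and> \<sigma> \<noteq> {}) \<and>
     (\<forall>\<sigma>\<in>K. \<forall>\<tau>. \<tau> \<subseteq> \<sigma> \<and> \<tau> \<noteq> {} \<longrightarrow> \<tau> \<in> K)"

text \<open>Underlying space (geometric realization) in barycentric coordinates, as a
subspace of the product space nat => real.\<close>
definition realization :: "nat set set \<Rightarrow> (nat \<Rightarrow> real) set" where
  "realization K = {t. (\<forall>i. t i \<ge> 0) \<and> {i. t i \<noteq> 0} \<in> K \<and> sum t {i. t i \<noteq> 0} = 1}"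

definition triangulable :: "'a topology \<Rightarrow> bool" where
  "triangulable X \<longleftrightarrow> (\<exists>K. finite_simplicial_complex K \<and>
     X homeomorphic_space subtopology (euclidean :: (nat \<Rightarrow> real) topology) (realization K))"

definition open_cover :: "'a topology \<Rightarrow> 'a set list \<Rightarrow> bool" where
  "open_cover S U \<longleftrightarrow> (\<forall>W\<in>set U. openin S W) \<and> topspace S \<subseteq> \<Union>(set U)"

definition nerve_simplices :: "'a topology \<Rightarrow> 'a set list \<Rightarrow> int \<Rightarrow> nat list set" where
  "nerve_simplices S U k = {\<sigma>. \<sigma> \<noteq> [] \<and> int (length \<sigma>) = k + 1 \<and> (\<forall>i\<in>set \<sigma>. i < length U) \<and>
      topspace S \<inter> (\<Inter>i\<in>set \<sigma>. U ! i) \<noteq> {}}"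

definition chains :: "'a topology \<Rightarrow> 'a set list \<Rightarrow> int \<Rightarrow> (nat list \<Rightarrow> 'k::field) set" where
  "chains S U k = {c. \<forall>\<sigma>. \<sigma> \<notin> nerve_simplices S U k \<longrightarrow> c \<sigma> = 0}"

definition del_nth :: "nat \<Rightarrow> 'b list \<Rightarrow> 'b list" where
  "del_nth i xs = take i xs @ drop (Suc i) xs"

definition boundary :: "'a topology \<Rightarrow> 'a set list \<Rightarrow> int \<Rightarrow> (nat list \<Rightarrow> 'k::field) \<Rightarrow> (nat list \<Rightarrow> 'k)" where
  "boundary S U k c = (\<lambda>\<tau>. if \<tau> \<in> nerve_simplices S U (k - 1) then
      (\<Sum>(\<sigma>, i)\<in>{(\<sigma>, i). \<sigma> \<in> nerve_simplices S U k \<and> i < length \<sigma> \<and> del_nth i \<sigma> = \<tau>}.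
         (-1) ^ i * c \<sigma>) else 0)"

definition cycles :: "'a topology \<Rightarrow> 'a set list \<Rightarrow> int \<Rightarrow> (nat list \<Rightarrow> 'k::field) set" where
  "cycles S U k = {c \<in> chains S U k. boundary S U k c = (\<lambda>_. 0)}"

definition boundaries :: "'a topology \<Rightarrow> 'a set list \<Rightarrow> int \<Rightarrow> (nat list \<Rightarrow> 'k::field) set" where
  "boundaries S U k = boundary S U (k + 1) ` chains S U (k + 1)"

definition refines_via :: "'a set list \<Rightarrow> 'a set list \<Rightarrow> (nat \<Rightarrow> nat) \<Rightarrow> bool" where
  "refines_via V U g \<longleftrightarrow> (\<forall>j<length V. g j < length U \<and> V ! j \<subseteq> U ! g j)"

definition chain_map :: "'a topology \<Rightarrow> 'a set list \<Rightarrow> int \<Rightarrow> (nat \<Rightarrow> nat) \<Rightarrow> (nat list \<Rightarrow> 'k::field) \<Rightarrow> (nat list \<Rightarrow> 'k)" where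
  "chain_map S V k g c = (\<lambda>\<tau>. \<Sum>\<sigma>\<in>{\<sigma> \<in> nerve_simplices S V k. map g \<sigma> = \<tau>}. c \<sigma>)"

text \<open>An element of the Cech homology group (inverse limit over covers) is represented by a
family of cycles, one per finite open cover, compatible under refinement up to boundaries.\<close>
definition cech_elements :: "'a topology \<Rightarrow> int \<Rightarrow> ('a set list \<Rightarrow> nat list \<Rightarrow> 'k::field) set" where
  "cech_elements S k = {z. (\<forall>U. open_cover S U \<longrightarrow> z U \<in> cycles S U k) \<and>
      (\<forall>U V g. open_cover S U \<and> open_cover S V \<and> refines_via V U g \<longrightarrow>
          (\<lambda>\<tau>. chain_map S V k g (z V) \<tau> - z U \<tau>) \<in> boundaries S U k)}"

definition cech_zero :: "'a topology \<Rightarrow> int \<Rightarrow> ('a set list \<Rightarrow> nat list \<Rightarrow> 'k::field) \<Rightarrow> bool" where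
  "cech_zero S k z \<longleftrightarrow> (\<forall>U. open_cover S U \<longrightarrow> z U \<in> boundaries S U k)"

definition cech_lin_indep :: "'a topology \<Rightarrow> int \<Rightarrow> ('a set list \<Rightarrow> nat list \<Rightarrow> 'k::field) list \<Rightarrow> bool" where
  "cech_lin_indep S k zs \<longleftrightarrow> (\<forall>c :: nat \<Rightarrow> 'k.
      cech_zero S k (\<lambda>U \<tau>. \<Sum>i<length zs. c i * (zs ! i) U \<tau>) \<longrightarrow> (\<forall>i<length zs. c i = 0))"

text \<open>Map in Cech homology induced by the inclusion A into B (A subset of B): a cover of B
restricts to a cover of A whose nerve is a subcomplex of the nerve of the cover of B.\<close>
definition cech_inclusion_map :: "'a set \<Rightarrow> ('a set list \<Rightarrow> nat list \<Rightarrow> 'k) \<Rightarrow> ('a set list \<Rightarrow> nat list \<Rightarrow> 'k)" where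
  "cech_inclusion_map A z = (\<lambda>U. z (map (\<lambda>W. W \<inter> A) U))"

text \<open>Rank (dimension of the image, possibly infinite) of the map
H_k(A) -> H_k(B) induced by inclusion, A, B with the subspace topology of X.\<close>
definition cech_rank :: "'k::field itself \<Rightarrow> 'a topology \<Rightarrow> 'a set \<Rightarrow> 'a set \<Rightarrow> int \<Rightarrow> enat" where
  "cech_rank K X A B k = Sup {enat m | m. \<exists>zs :: ('a set list \<Rightarrow> nat list \<Rightarrow> 'k) list.
      length zs = m \<and> set zs \<subseteq> cech_elements (subtopology X A) k \<and>
      cech_lin_indep (subtopology X B) k (map (cech_inclusion_map A) zs)}"

definition vec_le :: "real^'n \<Rightarrow> real^'n \<Rightarrow> bool" where
  "vec_le u v \<longleftrightarrow> (\<forall>i. u $ i \<le> v $ i)"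

definition vec_lt :: "real^'n \<Rightarrow> real^'n \<Rightarrow> bool" where
  "vec_lt u v \<longleftrightarrow> (\<forall>i. u $ i < v $ i)"

definition sublevel :: "'a topology \<Rightarrow> ('a \<Rightarrow> real^'n) \<Rightarrow> real^'n \<Rightarrow> 'a set" where
  "sublevel X \<phi> u = {x \<in> topspace X. vec_le (\<phi> x) u}"

definition persistence_rank :: "'k::field itself \<Rightarrow> 'a topology \<Rightarrow> ('a \<Rightarrow> real^'n) \<Rightarrow> int \<Rightarrow> real^'n \<Rightarrow> real^'n \<Rightarrow> enat" where
  "persistence_rank K X \<phi> k u v = cech_rank K X (sublevel X \<phi> u) (sublevel X \<phi> v) k"

end

theory Submission
  imports Defs
begin


lemma finite_nerve: "finite (nerve_simplices S U k)"
proof -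
  have "nerve_simplices S U k \<subseteq> {xs. set xs \<subseteq> {..<length U} \<and> length xs = nat (k+1)}"
  proof
    fix xs assume "xs \<in> nerve_simplices S U k"
    then have "\<forall>i\<in>set xs. i < length U" "int (length xs) = k + 1" unfolding nerve_simplices_def by blast+
    then show "xs \<in> {xs. set xs \<subseteq> {..<length U} \<and> length xs = nat (k+1)}" by auto
  qed
  moreover have "finite {xs. set xs \<subseteq> {..<length U} \<and> length xs = nat (k+1)}"
    by (rule finite_lists_length_eq) simp
  ultimately show ?thesis by (rule finite_subset)
qed

lemma nerve_mono:
  assumes "length U1 = length U2" "topspace S1 \<subseteq> topspace S2" "\<forall>i<length U1. U1!i \<subseteq> U2!i"
  shows "nerve_simplices S1 U1 j \<subseteq> nerve_simplices S2 U2 j"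
proof
  fix \<sigma> assume "\<sigma> \<in> nerve_simplices S1 U1 j"
  then have \<sigma>: "\<sigma> \<noteq> []" "int (length \<sigma>) = j + 1" "\<forall>i\<in>set \<sigma>. i < length U1"
     "topspace S1 \<inter> (\<Inter>i\<in>set \<sigma>. U1 ! i) \<noteq> {}"
    unfolding nerve_simplices_def by blast+
  from \<sigma>(4) obtain x where x: "x \<in> topspace S1" "x \<in> (\<Inter>i\<in>set \<sigma>. U1 ! i)" by blast
  have x1: "x \<in> topspace S2" using assms(2) x(1) by blast
  have x2: "x \<in> (\<Inter>i\<in>set \<sigma>. U2 ! i)"
  proof
    fix i assume i: "i \<in> set \<sigma>"
    then have "x \<in> U1 ! i" using x(2) by blast
    moreover have "U1 ! i \<subseteq> U2 ! i" using assms(3) \<sigma>(3) i by blast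
    ultimately show "x \<in> U2 ! i" by blast
  qed
  have "\<forall>i\<in>set \<sigma>. i < length U2" using \<sigma>(3) assms(1) by simp
  moreover have "topspace S2 \<inter> (\<Inter>i\<in>set \<sigma>. U2 ! i) \<noteq> {}" using x1 x2 by blast
  ultimately show "\<sigma> \<in> nerve_simplices S2 U2 j"
    unfolding nerve_simplices_def using \<sigma>(1,2) by blast
qed

lemma del_nth_set: "set (del_nth i xs) \<subseteq> set xs"
  unfolding del_nth_def using set_take_subset set_drop_subset by fastforce

lemma nerve_face:
  assumes "\<sigma> \<in> nerve_simplices S U k" "\<tau> = del_nth i \<sigma>" "\<tau> \<in> nerve_simplices S2 U2 (k-1)"
  shows "\<tau> \<in> nerve_simplices S U (k-1)"
proof -
  have st: "set \<tau> \<subseteq> set \<sigma>" unfolding assms(2) by (rule del_nth_set)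
  have \<sigma>1: "\<forall>i\<in>set \<sigma>. i < length U" using assms(1) by (simp add: nerve_simplices_def)
  have \<sigma>2: "topspace S \<inter> (\<Inter>i\<in>set \<sigma>. U ! i) \<noteq> {}" using assms(1) by (simp add: nerve_simplices_def)
  have \<tau>1: "\<tau> \<noteq> []" using assms(3) by (simp add: nerve_simplices_def)
  have \<tau>2: "int (length \<tau>) = k - 1 + 1" using assms(3) by (simp add: nerve_simplices_def)
  from \<sigma>2 obtain x where x: "x \<in> topspace S" "x \<in> (\<Inter>i\<in>set \<sigma>. U ! i)" by blast
  have x2: "x \<in> (\<Inter>i\<in>set \<tau>. U ! i)" using x(2) st by (simp add: subset_iff)
  have t3: "topspace S \<inter> (\<Inter>i\<in>set \<tau>. U ! i) \<noteq> {}" using x(1) x2 by blast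
  have t4: "\<forall>i\<in>set \<tau>. i < length U" using \<sigma>1 st by blast
  show ?thesis unfolding nerve_simplices_def mem_Collect_eq
    using \<tau>1 \<tau>2 t3 t4 by (intro conjI)
qed

context
  fixes S1 U1 S2 U2
  assumes H: "\<And>j. nerve_simplices S1 U1 j \<subseteq> nerve_simplices S2 U2 j"
begin

lemma chains_mono: "chains S1 U1 j \<subseteq> chains S2 U2 j"
  using H unfolding chains_def by blast

lemma boundary_sub:
  assumes c: "c \<in> chains S1 U1 k"
  shows "boundary S1 U1 k c = boundary S2 U2 k c"
proof (rule ext)
  fix \<tau>
  define I1 where "I1 = {(\<sigma>, i). \<sigma> \<in> nerve_simplices S1 U1 k \<and> i < length \<sigma> \<and> del_nth i \<sigma> = \<tau>}"
  define I2 where "I2 = {(\<sigma>, i). \<sigma> \<in> nerve_simplices S2 U2 k \<and> i < length \<sigma> \<and> del_nth i \<sigma> = \<tau>}"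
  define t where "t = (\<lambda>(\<sigma>, i). (-1) ^ i * c \<sigma>)"
  have b1: "boundary S1 U1 k c \<tau> = (if \<tau> \<in> nerve_simplices S1 U1 (k-1) then sum t I1 else 0)"
    by (simp add: boundary_def I1_def t_def)
  have b2: "boundary S2 U2 k c \<tau> = (if \<tau> \<in> nerve_simplices S2 U2 (k-1) then sum t I2 else 0)"
    by (simp add: boundary_def I2_def t_def)
  have fin: "finite I2"
  proof (rule finite_subset)
    show "I2 \<subseteq> Sigma (nerve_simplices S2 U2 k) (\<lambda>\<sigma>. {..<length \<sigma>})" by (auto simp: I2_def)
    show "finite (Sigma (nerve_simplices S2 U2 k) (\<lambda>\<sigma>. {..<length \<sigma>}))"
      by (rule finite_SigmaI) (auto simp: finite_nerve)
  qed
  have sub: "I1 \<subseteq> I2" using H by (auto simp: I1_def I2_def)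
  have z: "\<forall>x\<in>I2 - I1. t x = 0"
    using c by (auto simp: I1_def I2_def t_def chains_def)
  show "boundary S1 U1 k c \<tau> = boundary S2 U2 k c \<tau>"
  proof (cases "\<tau> \<in> nerve_simplices S1 U1 (k-1)")
    case True
    then have "\<tau> \<in> nerve_simplices S2 U2 (k-1)" using H by blast
    then show ?thesis using True sum.mono_neutral_left[OF fin sub z] b1 b2 by simp
  next
    case False
    show ?thesis
    proof (cases "\<tau> \<in> nerve_simplices S2 U2 (k-1)")
      case True2: True
      have "\<forall>x\<in>I2. t x = 0"
      proof
        fix x assume x: "x \<in> I2"
        obtain \<sigma> i where xe: "x = (\<sigma>, i)" by (cases x)
        have "\<sigma> \<notin> nerve_simplices S1 U1 k"
        proof
          assume s1: "\<sigma> \<in> nerve_simplices S1 U1 k"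
          have dt: "\<tau> = del_nth i \<sigma>" using x xe unfolding I2_def by simp
          have "\<tau> \<in> nerve_simplices S1 U1 (k-1)"
            by (rule nerve_face[OF s1 dt True2])
          then show False using False by blast
        qed
        then show "t x = 0" using c xe by (simp add: t_def chains_def)
      qed
      then show ?thesis using b1 b2 False True2 by simp
    next
      case False2: False
      then show ?thesis using b1 b2 False by simp
    qed
  qed
qed

lemma cycles_mono: "cycles S1 U1 k \<subseteq> cycles S2 U2 k"
proof
  fix c assume "c \<in> cycles S1 U1 k"
  then have c: "c \<in> chains S1 U1 k" "boundary S1 U1 k c = (\<lambda>_. 0)" unfolding cycles_def by auto
  then have "boundary S2 U2 k c = (\<lambda>_. 0)" using boundary_sub by metis
  then show "c \<in> cycles S2 U2 k" using c chains_mono unfolding cycles_def by blast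
qed

lemma boundaries_mono: "boundaries S1 U1 k \<subseteq> boundaries S2 U2 k"
proof
  fix b assume "b \<in> boundaries S1 U1 k"
  then obtain c where c: "c \<in> chains S1 U1 (k+1)" "b = boundary S1 U1 (k+1) c"
    unfolding boundaries_def by blast
  then have "b = boundary S2 U2 (k+1) c" using boundary_sub by simp
  moreover have "c \<in> chains S2 U2 (k+1)" using c chains_mono by blast
  ultimately show "b \<in> boundaries S2 U2 k" unfolding boundaries_def by blast
qed

lemma chain_map_sub:
  assumes c: "c \<in> chains S1 U1 k"
  shows "chain_map S1 U1 k g c = chain_map S2 U2 k g c"
proof (rule ext)
  fix \<tau>
  have fin: "finite {\<sigma> \<in> nerve_simplices S2 U2 k. map g \<sigma> = \<tau>}"
    by (rule finite_subset[OF _ finite_nerve]) auto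
  have sub: "{\<sigma> \<in> nerve_simplices S1 U1 k. map g \<sigma> = \<tau>} \<subseteq> {\<sigma> \<in> nerve_simplices S2 U2 k. map g \<sigma> = \<tau>}"
    using H by auto
  have z: "\<forall>x\<in>{\<sigma> \<in> nerve_simplices S2 U2 k. map g \<sigma> = \<tau>} - {\<sigma> \<in> nerve_simplices S1 U1 k. map g \<sigma> = \<tau>}. c x = 0"
    using c by (auto simp: chains_def)
  show "chain_map S1 U1 k g c \<tau> = chain_map S2 U2 k g c \<tau>"
    unfolding chain_map_def using sum.mono_neutral_left[OF fin sub z] by simp
qed

end



lemma cover_restrict:
  assumes "A \<subseteq> C" "open_cover (subtopology X C) U"
  shows "open_cover (subtopology X A) (map (\<lambda>W. W \<inter> A) U)"
proof -
  have "openin (subtopology X A) (W \<inter> A)" if "W \<in> set U" for W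
  proof -
    from assms(2) that obtain T where T: "openin X T" "W = T \<inter> C"
      by (auto simp: open_cover_def openin_subtopology)
    then have "W \<inter> A = T \<inter> A" using assms(1) by auto
    then show ?thesis using T(1) by (auto simp: openin_subtopology)
  qed
  moreover have "topspace X \<inter> A \<subseteq> \<Union> (set (map (\<lambda>W. W \<inter> A) U))"
    using assms by (auto simp: open_cover_def)
  ultimately show ?thesis by (auto simp: open_cover_def)
qed

lemma nerve_restrict: "A \<subseteq> C \<Longrightarrow>
  nerve_simplices (subtopology X A) (map (\<lambda>W. W \<inter> A) U) j \<subseteq> nerve_simplices (subtopology X C) U j"
  by (rule nerve_mono) auto

lemma incl_elements:
  assumes AC: "A \<subseteq> C" and z: "z \<in> cech_elements (subtopology X A) k"
  shows "cech_inclusion_map A z \<in> cech_elements (subtopology X C) k"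
  unfolding cech_elements_def mem_Collect_eq
proof (intro conjI allI impI)
  fix U assume U: "open_cover (subtopology X C) U"
  have "z (map (\<lambda>W. W\<inter>A) U) \<in> cycles (subtopology X A) (map (\<lambda>W. W\<inter>A) U) k"
    using z cover_restrict[OF AC U] by (auto simp: cech_elements_def)
  then show "cech_inclusion_map A z U \<in> cycles (subtopology X C) U k"
    using cycles_mono[OF nerve_restrict[OF AC]] by (auto simp: cech_inclusion_map_def)
next
  fix U V g assume a: "open_cover (subtopology X C) U \<and> open_cover (subtopology X C) V \<and> refines_via V U g"
  let ?U = "map (\<lambda>W. W\<inter>A) U" let ?V = "map (\<lambda>W. W\<inter>A) V"
  have cU: "open_cover (subtopology X A) ?U" using a cover_restrict[OF AC] by blast
  have cV: "open_cover (subtopology X A) ?V" using a cover_restrict[OF AC] by blast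
  have r: "refines_via ?V ?U g" using a by (auto simp: refines_via_def)
  have d: "(\<lambda>\<tau>. chain_map (subtopology X A) ?V k g (z ?V) \<tau> - z ?U \<tau>) \<in> boundaries (subtopology X A) ?U k"
    using z cU cV r unfolding cech_elements_def by blast
  have zc: "z ?V \<in> chains (subtopology X A) ?V k"
    using z cV unfolding cech_elements_def cycles_def by blast
  have "chain_map (subtopology X A) ?V k g (z ?V) = chain_map (subtopology X C) V k g (z ?V)"
    by (rule chain_map_sub[OF nerve_restrict[OF AC] zc])
  then show "(\<lambda>\<tau>. chain_map (subtopology X C) V k g (cech_inclusion_map A z V) \<tau> - cech_inclusion_map A z U \<tau>)
      \<in> boundaries (subtopology X C) U k"
    using d boundaries_mono[OF nerve_restrict[OF AC]] by (auto simp: cech_inclusion_map_def)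
qed

lemma incl_zero:
  assumes AC: "A \<subseteq> C" and w: "cech_zero (subtopology X A) k w"
  shows "cech_zero (subtopology X C) k (cech_inclusion_map A w)"
  unfolding cech_zero_def
proof (intro allI impI)
  fix U assume U: "open_cover (subtopology X C) U"
  have "w (map (\<lambda>W. W\<inter>A) U) \<in> boundaries (subtopology X A) (map (\<lambda>W. W\<inter>A) U) k"
    using w cover_restrict[OF AC U] unfolding cech_zero_def by blast
  then show "cech_inclusion_map A w U \<in> boundaries (subtopology X C) U k"
    using boundaries_mono[OF nerve_restrict[OF AC]] by (auto simp: cech_inclusion_map_def)
qed

lemma rank_mono:
  assumes a1: "A \<subseteq> A2" and a2: "A2 \<subseteq> B2" and a3: "B2 \<subseteq> B"
  shows "cech_rank (K::'k::field itself) X A B k \<le> cech_rank K X A2 B2 k"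
  unfolding cech_rank_def
proof (rule Sup_subset_mono, rule subsetI)
  fix e assume "e \<in> {enat m |m. \<exists>zs :: ('a set list \<Rightarrow> nat list \<Rightarrow> 'k) list. length zs = m \<and>
      set zs \<subseteq> cech_elements (subtopology X A) k \<and>
      cech_lin_indep (subtopology X B) k (map (cech_inclusion_map A) zs)}"
  then obtain zs :: "('a set list \<Rightarrow> nat list \<Rightarrow> 'k) list" where zs: "e = enat (length zs)"
    "set zs \<subseteq> cech_elements (subtopology X A) k"
    "cech_lin_indep (subtopology X B) k (map (cech_inclusion_map A) zs)" by blast
  define zs2 where "zs2 = map (cech_inclusion_map A) zs"
  have s2: "set zs2 \<subseteq> cech_elements (subtopology X A2) k"
    using zs(2) incl_elements[OF a1] by (auto simp: zs2_def)
  have WW: "\<And>W. W \<inter> B2 \<inter> A2 \<inter> A = W \<inter> A" using a1 a2 by auto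
  have i2: "cech_lin_indep (subtopology X B2) k (map (cech_inclusion_map A2) zs2)"
    unfolding cech_lin_indep_def
  proof (rule allI, rule impI)
    fix c :: "nat \<Rightarrow> 'k"
    let ?w = "(\<lambda>U \<tau>. \<Sum>i<length (map (cech_inclusion_map A2) zs2). c i * (map (cech_inclusion_map A2) zs2 ! i) U \<tau>)"
    assume h: "cech_zero (subtopology X B2) k ?w"
    have "cech_zero (subtopology X B) k (cech_inclusion_map B2 ?w)" by (rule incl_zero[OF a3 h])
    moreover have "cech_inclusion_map B2 ?w = (\<lambda>U \<tau>. \<Sum>i<length (map (cech_inclusion_map A) zs). c i * (map (cech_inclusion_map A) zs ! i) U \<tau>)"
      by (simp add: cech_inclusion_map_def zs2_def o_def WW)
    ultimately show "\<forall>i<length (map (cech_inclusion_map A2) zs2). c i = 0"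
      using zs(3) unfolding cech_lin_indep_def by (simp add: zs2_def)
  qed
  show "e \<in> {enat m |m. \<exists>zs :: ('a set list \<Rightarrow> nat list \<Rightarrow> 'k) list. length zs = m \<and>
      set zs \<subseteq> cech_elements (subtopology X A2) k \<and>
      cech_lin_indep (subtopology X B2) k (map (cech_inclusion_map A2) zs)}"
  proof -
    have "length zs2 = length zs" by (simp add: zs2_def)
    then show ?thesis using s2 i2 zs(1) by blast
  qed
qed


definition pre :: "'a topology \<Rightarrow> ('a \<Rightarrow> 'b) \<Rightarrow> 'b set \<Rightarrow> 'a set" where
  "pre X f W = {x \<in> topspace X. f x \<in> W}"

lemma pre_Int: "pre X f (W \<inter> A) = pre X f W \<inter> pre X f A"
  by (auto simp: pre_def)

context
  fixes X :: "'a topology" and Y :: "'b topology" and f :: "'a \<Rightarrow> 'b"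
  assumes hf: "homeomorphic_map X Y f"
begin

lemma surj_f: "f ` topspace X = topspace Y"
  using homeomorphic_imp_surjective_map[OF hf] .

lemma nerve_pre:
  "nerve_simplices (subtopology Y C) U j = nerve_simplices (subtopology X (pre X f C)) (map (pre X f) U) j"
proof -
  have key: "topspace X \<inter> pre X f C \<inter> (\<Inter>i\<in>set \<sigma>. map (pre X f) U ! i) \<noteq> {}
      \<longleftrightarrow> topspace Y \<inter> C \<inter> (\<Inter>i\<in>set \<sigma>. U ! i) \<noteq> {}"
    if s: "\<forall>i\<in>set \<sigma>. i < length U" for \<sigma>
  proof
    assume "topspace X \<inter> pre X f C \<inter> (\<Inter>i\<in>set \<sigma>. map (pre X f) U ! i) \<noteq> {}"
    then obtain x where x: "x \<in> topspace X" "f x \<in> C" "\<forall>i\<in>set \<sigma>. x \<in> map (pre X f) U ! i"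
      by (auto simp: pre_def)
    have "f x \<in> topspace Y" using x(1) surj_f by blast
    moreover have "\<forall>i\<in>set \<sigma>. f x \<in> U ! i" using x(3) s by (auto simp: pre_def)
    ultimately show "topspace Y \<inter> C \<inter> (\<Inter>i\<in>set \<sigma>. U ! i) \<noteq> {}" using x(2) by blast
  next
    assume "topspace Y \<inter> C \<inter> (\<Inter>i\<in>set \<sigma>. U ! i) \<noteq> {}"
    then obtain y where y: "y \<in> topspace Y" "y \<in> C" "\<forall>i\<in>set \<sigma>. y \<in> U ! i" by blast
    then have "y \<in> f ` topspace X" using surj_f by auto
    then obtain x where x: "x \<in> topspace X" "f x = y" by (metis imageE)
    have "\<forall>i\<in>set \<sigma>. x \<in> map (pre X f) U ! i" using x y(3) s by (auto simp: pre_def)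
    then show "topspace X \<inter> pre X f C \<inter> (\<Inter>i\<in>set \<sigma>. map (pre X f) U ! i) \<noteq> {}"
      using x y(2) by (auto simp: pre_def)
  qed
  show ?thesis
    unfolding nerve_simplices_def topspace_subtopology
  proof (rule Collect_cong)
    fix \<sigma> :: "nat list"
    show "(\<sigma> \<noteq> [] \<and> int (length \<sigma>) = j + 1 \<and> (\<forall>i\<in>set \<sigma>. i < length U) \<and>
          topspace Y \<inter> C \<inter> (\<Inter>i\<in>set \<sigma>. U ! i) \<noteq> {}) =
         (\<sigma> \<noteq> [] \<and> int (length \<sigma>) = j + 1 \<and> (\<forall>i\<in>set \<sigma>. i < length (map (pre X f) U)) \<and>
          topspace X \<inter> pre X f C \<inter> (\<Inter>i\<in>set \<sigma>. map (pre X f) U ! i) \<noteq> {})"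
      using key[of \<sigma>] by (simp only: length_map) blast
  qed
qed

lemma cover_pre:
  assumes U: "open_cover (subtopology Y C) U"
  shows "open_cover (subtopology X (pre X f C)) (map (pre X f) U)"
proof -
  have "openin (subtopology X (pre X f C)) (pre X f W)" if "W \<in> set U" for W
  proof -
    from U that obtain T where T: "openin Y T" "W = T \<inter> C"
      by (auto simp: open_cover_def openin_subtopology)
    have "openin X (pre X f T)"
      unfolding pre_def by (rule openin_continuous_map_preimage[OF homeomorphic_imp_continuous_map[OF hf] T(1)])
    moreover have "pre X f W = pre X f T \<inter> pre X f C" using T(2) pre_Int by metis
    ultimately show ?thesis by (auto simp: openin_subtopology)
  qed
  moreover have "topspace X \<inter> pre X f C \<subseteq> \<Union> (set (map (pre X f) U))"
  proof
    fix x assume x: "x \<in> topspace X \<inter> pre X f C"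
    then have "f x \<in> topspace Y \<inter> C" using surj_f by (auto simp: pre_def)
    then obtain W where "W \<in> set U" "f x \<in> W" using U by (auto simp: open_cover_def)
    then show "x \<in> \<Union> (set (map (pre X f) U))" using x by (auto simp: pre_def)
  qed
  ultimately show ?thesis by (auto simp: open_cover_def)
qed

lemma cover_img:
  assumes U: "open_cover (subtopology X (pre X f C)) U"
  shows "open_cover (subtopology Y C) (map ((`) f) U)" "map (pre X f) (map ((`) f) U) = U"
proof -
  have inj: "inj_on f (topspace X)" using homeomorphic_imp_injective_map[OF hf] .
  have sub: "W \<subseteq> topspace X" if "W \<in> set U" for W
    using U that openin_subset by (fastforce simp: open_cover_def)
  have "openin (subtopology Y C) (f ` W)" if "W \<in> set U" for W
  proof -
    from U that obtain T where T: "openin X T" "W = T \<inter> pre X f C"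
      by (auto simp: open_cover_def openin_subtopology)
    have "openin Y (f ` T)" using homeomorphic_imp_open_map[OF hf] T(1) by (simp add: open_map_def)
    moreover have "f ` W = f ` T \<inter> C"
    proof
      show "f ` W \<subseteq> f ` T \<inter> C" using T(2) by (auto simp: pre_def)
      show "f ` T \<inter> C \<subseteq> f ` W"
      proof
        fix y assume "y \<in> f ` T \<inter> C"
        then obtain t where t: "t \<in> T" "y = f t" "f t \<in> C" by blast
        then have "t \<in> W" using T(2) openin_subset[OF T(1)] by (auto simp: pre_def)
        then show "y \<in> f ` W" using t by blast
      qed
    qed
    ultimately show ?thesis by (auto simp: openin_subtopology)
  qed
  moreover have "topspace Y \<inter> C \<subseteq> \<Union> (set (map ((`) f) U))"
  proof
    fix y assume y: "y \<in> topspace Y \<inter> C"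
    then have "y \<in> f ` topspace X" using surj_f by auto
    then obtain x where x: "x \<in> topspace X" "f x = y" by (metis imageE)
    then have "x \<in> topspace X \<inter> pre X f C" using y by (auto simp: pre_def)
    then obtain W where "W \<in> set U" "x \<in> W" using U by (auto simp: open_cover_def)
    then show "y \<in> \<Union> (set (map ((`) f) U))" using x by auto
  qed
  ultimately show "open_cover (subtopology Y C) (map ((`) f) U)" by (auto simp: open_cover_def)
  have "pre X f (f ` W) = W" if "W \<in> set U" for W
  proof (rule set_eqI)
    fix x show "x \<in> pre X f (f ` W) \<longleftrightarrow> x \<in> W"
    proof
      assume "x \<in> pre X f (f ` W)"
      then have x: "x \<in> topspace X" "f x \<in> f ` W" by (simp_all add: pre_def)
      then obtain w where w: "w \<in> W" "f x = f w" by (metis imageE)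
      have "w \<in> topspace X" using w(1) sub[OF that] by blast
      then have "x = w" using inj x(1) w(2) by (metis inj_on_eq_iff)
      then show "x \<in> W" using w(1) by simp
    next
      assume "x \<in> W" then show "x \<in> pre X f (f ` W)" using sub[OF that] by (auto simp: pre_def)
    qed
  qed
  then show "map (pre X f) (map ((`) f) U) = U" by (simp add: map_idI)
qed

lemma HA: "nerve_simplices (subtopology X (pre X f A)) (map (pre X f) U) j \<subseteq> nerve_simplices (subtopology Y A) U j"
  using nerve_pre by blast

lemma HB: "nerve_simplices (subtopology Y B) U j \<subseteq> nerve_simplices (subtopology X (pre X f B)) (map (pre X f) U) j"
  using nerve_pre by blast

lemma elem_transport:
  assumes zE: "z \<in> cech_elements (subtopology X (pre X f A)) k"
  shows "(\<lambda>U. z (map (pre X f) U)) \<in> cech_elements (subtopology Y A) k"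
  unfolding cech_elements_def mem_Collect_eq
proof (intro conjI allI impI)
  fix U assume U: "open_cover (subtopology Y A) U"
  have "z (map (pre X f) U) \<in> cycles (subtopology X (pre X f A)) (map (pre X f) U) k"
    using zE cover_pre[OF U] unfolding cech_elements_def by blast
  moreover have "cycles (subtopology X (pre X f A)) (map (pre X f) U) k \<subseteq> cycles (subtopology Y A) U k"
    by (rule cycles_mono) (rule HA)
  ultimately show "z (map (pre X f) U) \<in> cycles (subtopology Y A) U k" by (rule rev_subsetD)
next
  fix U V g assume a: "open_cover (subtopology Y A) U \<and> open_cover (subtopology Y A) V \<and> refines_via V U g"
  let ?U = "map (pre X f) U" let ?V = "map (pre X f) V"
  have cU: "open_cover (subtopology X (pre X f A)) ?U" using a cover_pre by blast
  have cV: "open_cover (subtopology X (pre X f A)) ?V" using a cover_pre by blast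
  have r: "refines_via ?V ?U g"
    unfolding refines_via_def
  proof (intro allI impI)
    fix j assume j: "j < length ?V"
    then have "g j < length U \<and> V ! j \<subseteq> U ! g j" using a unfolding refines_via_def by simp
    then show "g j < length ?U \<and> ?V ! j \<subseteq> ?U ! g j" using j by (auto simp: pre_def)
  qed
  have d: "(\<lambda>\<tau>. chain_map (subtopology X (pre X f A)) ?V k g (z ?V) \<tau> - z ?U \<tau>) \<in> boundaries (subtopology X (pre X f A)) ?U k"
    using zE cU cV r unfolding cech_elements_def by blast
  have zc: "z ?V \<in> chains (subtopology X (pre X f A)) ?V k"
    using zE cV unfolding cech_elements_def cycles_def by blast
  have eq: "chain_map (subtopology X (pre X f A)) ?V k g (z ?V) = chain_map (subtopology Y A) V k g (z ?V)"
    by (rule chain_map_sub[OF HA zc])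
  have bm: "boundaries (subtopology X (pre X f A)) ?U k \<subseteq> boundaries (subtopology Y A) U k"
    by (rule boundaries_mono) (rule HA)
  show "(\<lambda>\<tau>. chain_map (subtopology Y A) V k g (z ?V) \<tau> - z ?U \<tau>) \<in> boundaries (subtopology Y A) U k"
    using d bm unfolding eq by blast
qed

lemma zero_transport:
  assumes h: "cech_zero (subtopology Y B) k (\<lambda>U. v (map (pre X f) U))"
  shows "cech_zero (subtopology X (pre X f B)) k v"
  unfolding cech_zero_def
proof (rule allI, rule impI)
  fix U assume U: "open_cover (subtopology X (pre X f B)) U"
  let ?U' = "map ((`) f) U"
  have c1: "open_cover (subtopology Y B) ?U'" and c2: "map (pre X f) ?U' = U"
    using cover_img[OF U] by auto
  have w1: "v (map (pre X f) ?U') \<in> boundaries (subtopology Y B) ?U' k" using h c1 unfolding cech_zero_def by blast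
  have sb: "boundaries (subtopology Y B) ?U' k \<subseteq> boundaries (subtopology X (pre X f B)) (map (pre X f) ?U') k"
    by (rule boundaries_mono) (rule HB)
  have "v (map (pre X f) ?U') \<in> boundaries (subtopology X (pre X f B)) (map (pre X f) ?U') k"
    using sb w1 by (rule subsetD)
  then show "v U \<in> boundaries (subtopology X (pre X f B)) U k" by (simp only: c2)
qed

lemma rank_transport:
  "cech_rank (K::'k::field itself) X (pre X f A) (pre X f B) k \<le> cech_rank K Y A B k"
  unfolding cech_rank_def
proof (rule Sup_subset_mono, rule subsetI)
  fix e assume "e \<in> {enat m |m. \<exists>zs :: ('a set list \<Rightarrow> nat list \<Rightarrow> 'k) list. length zs = m \<and>
      set zs \<subseteq> cech_elements (subtopology X (pre X f A)) k \<and>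
      cech_lin_indep (subtopology X (pre X f B)) k (map (cech_inclusion_map (pre X f A)) zs)}"
  then obtain zs :: "('a set list \<Rightarrow> nat list \<Rightarrow> 'k) list" where zs: "e = enat (length zs)"
    "set zs \<subseteq> cech_elements (subtopology X (pre X f A)) k"
    "cech_lin_indep (subtopology X (pre X f B)) k (map (cech_inclusion_map (pre X f A)) zs)" by blast
  define T where "T = (\<lambda>(z::'a set list \<Rightarrow> nat list \<Rightarrow> 'k) U. z (map (pre X f) U))"
  define zs2 where "zs2 = map T zs"
  have s2: "set zs2 \<subseteq> cech_elements (subtopology Y A) k"
  proof
    fix w assume "w \<in> set zs2"
    then obtain z where z: "z \<in> set zs" "w = T z" by (auto simp: zs2_def)
    then have zE: "z \<in> cech_elements (subtopology X (pre X f A)) k" using zs(2) by blast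
    show "w \<in> cech_elements (subtopology Y A) k"
      unfolding z(2) T_def by (rule elem_transport[OF zE])
  qed
  have i2: "cech_lin_indep (subtopology Y B) k (map (cech_inclusion_map A) zs2)"
    unfolding cech_lin_indep_def
  proof (rule allI, rule impI)
    fix c :: "nat \<Rightarrow> 'k"
    let ?w = "(\<lambda>U \<tau>. \<Sum>i<length (map (cech_inclusion_map A) zs2). c i * (map (cech_inclusion_map A) zs2 ! i) U \<tau>)"
    let ?v = "(\<lambda>U \<tau>. \<Sum>i<length (map (cech_inclusion_map (pre X f A)) zs). c i * (map (cech_inclusion_map (pre X f A)) zs ! i) U \<tau>)"
    assume h: "cech_zero (subtopology Y B) k ?w"
    have m: "map (pre X f) (map (\<lambda>W. W \<inter> A) U') = map (\<lambda>W. W \<inter> pre X f A) (map (pre X f) U')" for U'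
      by (simp add: pre_Int)
    have e: "(map (cech_inclusion_map A) zs2 ! i) U' = (map (cech_inclusion_map (pre X f A)) zs ! i) (map (pre X f) U')"
      if "i < length zs" for i U'
      using that unfolding zs2_def by (simp only: nth_map length_map T_def cech_inclusion_map_def m)
    have len: "length (map (cech_inclusion_map A) zs2) = length (map (cech_inclusion_map (pre X f A)) zs)"
      by (simp add: zs2_def)
    have weq: "?w = (\<lambda>U. ?v (map (pre X f) U))"
    proof (rule ext, rule ext)
      fix U' \<tau>
      show "?w U' \<tau> = ?v (map (pre X f) U') \<tau>"
        unfolding len by (rule sum.cong[OF refl]) (simp add: e)
    qed
    have "cech_zero (subtopology X (pre X f B)) k ?v"
      by (rule zero_transport) (use h weq in simp)
    then show "\<forall>i<length (map (cech_inclusion_map A) zs2). c i = 0"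
      using zs(3) unfolding cech_lin_indep_def by (simp add: zs2_def)
  qed
  show "e \<in> {enat m |m. \<exists>zs :: ('b set list \<Rightarrow> nat list \<Rightarrow> 'k) list. length zs = m \<and>
      set zs \<subseteq> cech_elements (subtopology Y A) k \<and>
      cech_lin_indep (subtopology Y B) k (map (cech_inclusion_map A) zs)}"
  proof -
    have "length zs2 = length zs" by (simp add: zs2_def)
    then show ?thesis using s2 i2 zs(1) by blast
  qed
qed

end

theorem mainTheorem5:
  fixes X :: "'a topology" and Y :: "'b topology" and f :: "'a \<Rightarrow> 'b"
    and \<phi> :: "'a \<Rightarrow> real^'n" and \<psi> :: "'b \<Rightarrow> real^'n"
    and k :: int and h :: real and u v :: "real^'n"
  assumes "triangulable X" and "triangulable Y"
    and "homeomorphic_map X Y f"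
    and "continuous_map X euclidean \<phi>" and "continuous_map Y euclidean \<psi>"
    and "\<forall>x\<in>topspace X. infnorm (\<phi> x - \<psi> (f x)) \<le> h"
    and "vec_lt u v"
  shows "persistence_rank TYPE('k::field) X \<phi> k (u - vec h) (v + vec h)
           \<le> persistence_rank TYPE('k) Y \<psi> k u v"
proof -
  have hf: "homeomorphic_map X Y f" by fact
  have surj: "f ` topspace X = topspace Y" using homeomorphic_imp_surjective_map[OF hf] .
  have comp: "\<bar>\<phi> x $ i - \<psi> (f x) $ i\<bar> \<le> h" if "x \<in> topspace X" for x i
  proof -
    have "\<bar>(\<phi> x - \<psi> (f x)) $ i\<bar> \<le> infnorm (\<phi> x - \<psi> (f x))" by (rule component_le_infnorm_cart)
    moreover have "infnorm (\<phi> x - \<psi> (f x)) \<le> h" using assms(6) that by blast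
    ultimately show ?thesis by simp
  qed
  let ?A = "sublevel X \<phi> (u - vec h)" let ?B = "sublevel X \<phi> (v + vec h)"
  let ?A' = "sublevel Y \<psi> u" let ?B' = "sublevel Y \<psi> v"
  have s1: "?A \<subseteq> pre X f ?A'"
  proof
    fix x assume x: "x \<in> ?A"
    then have xt: "x \<in> topspace X" by (simp add: sublevel_def)
    have "f x \<in> topspace Y" using xt surj by blast
    moreover have "vec_le (\<psi> (f x)) u"
      unfolding vec_le_def
    proof
      fix i
      have "\<phi> x $ i \<le> u $ i - h" using x by (simp add: sublevel_def vec_le_def)
      then show "\<psi> (f x) $ i \<le> u $ i" using comp[OF xt, of i] by linarith
    qed
    ultimately show "x \<in> pre X f ?A'" using xt by (simp add: pre_def sublevel_def)
  qed
  have s2: "pre X f ?A' \<subseteq> pre X f ?B'"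
  proof
    fix x assume "x \<in> pre X f ?A'"
    then have x: "x \<in> topspace X" "f x \<in> topspace Y" "\<forall>i. \<psi> (f x) $ i \<le> u $ i"
      by (auto simp: pre_def sublevel_def vec_le_def)
    have "\<forall>i. \<psi> (f x) $ i \<le> v $ i"
    proof
      fix i show "\<psi> (f x) $ i \<le> v $ i" using x(3) assms(7) unfolding vec_lt_def
        by (meson less_imp_le order_trans)
    qed
    then show "x \<in> pre X f ?B'" using x by (simp add: pre_def sublevel_def vec_le_def)
  qed
  have s3: "pre X f ?B' \<subseteq> ?B"
  proof
    fix x assume x: "x \<in> pre X f ?B'"
    then have xt: "x \<in> topspace X" by (simp add: pre_def)
    have "vec_le (\<phi> x) (v + vec h)"
      unfolding vec_le_def
    proof
      fix i
      have "\<psi> (f x) $ i \<le> v $ i" using x by (simp add: pre_def sublevel_def vec_le_def)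
      then show "\<phi> x $ i \<le> (v + vec h) $ i" using comp[OF xt, of i] by simp
    qed
    then show "x \<in> ?B" using xt by (simp add: sublevel_def)
  qed
  have "cech_rank TYPE('k) X ?A ?B k \<le> cech_rank TYPE('k) X (pre X f ?A') (pre X f ?B') k"
    by (rule rank_mono[OF s1 s2 s3])
  also have "\<dots> \<le> cech_rank TYPE('k) Y ?A' ?B' k"
    by (rule rank_transport[OF hf])
  finally show ?thesis unfolding persistence_rank_def .
qed

end
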